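(* Let $m \ge 2$ be an integer, let $n = 6m+1$, and let $G$ be the circulant graph on $n$ vertices with distance set $S = \{m\} \cup \{2m+1, 2m+2, \dots, 3m\}$; equivalently, vertices $u,v \in \mathbb{Z}/n\mathbb{Z}$ are adjacent if and only if $(u - v) \bmod n \in \{m, 5m+1\} \cup \{2m+1, \dots, 4m\}$. Then $G$ is a doubly saturated $R(4, m+2)$-good graph. More precisely: (1) $G$ contains no clique of size $4$; (2) $G$ contains no independent set of size $m+2$; (3) for every non-edge $\{u,v\}$ of $G$, the graph obtained by adding the edge $uv$ contains a clique of size $4$; (4) for every edge $\{u,v\}$ of $G$, the graph obtained by deleting the edge $uv$ contains an independent set of size $m+2$; and $G$ is neither complete nor edgeless.
   Context: For $x \in \mathbb{Z}/n\mathbb{Z}$, let $\|x\| := \min(x \bmod n,\; n - (x \bmod n))$. The circulant graph on $n$ vertices with distance set $S \subseteq \{1,\dots,\lfloor n/2\rfloor\}$ has vertex set $\mathbb{Z}/n\mathbb{Z}$, with $x$ and $y$ adjacent if and only if $\|x-y\| \in S$. A graph $G$ is \emph{$R(s,t)$-good} if it contains no clique of size $s$ and no independent set of size $t$. A graph $G$ is \emph{doubly saturated $R(s,t)$-good} if it is $R(s,t)$-good, adding any single missing edge yields a graph that is not $R(s,t)$-good, removing any single edge yields a graph that is not $R(s,t)$-good, and $G$ is neither complete nor edgeless. *)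

theory Defs
  imports Main
begin

text \<open>Simple graphs are given by a vertex set V and an adjacency predicate E
(intended symmetric and irreflexive on V).\<close>

definition has_clique :: "'a set \<Rightarrow> ('a \<Rightarrow> 'a \<Rightarrow> bool) \<Rightarrow> nat \<Rightarrow> bool" where
  "has_clique V E k \<longleftrightarrow> (\<exists>C. C \<subseteq> V \<and> card C = k \<and> (\<forall>x\<in>C. \<forall>y\<in>C. x \<noteq> y \<longrightarrow> E x y))"

definition has_indep :: "'a set \<Rightarrow> ('a \<Rightarrow> 'a \<Rightarrow> bool) \<Rightarrow> nat \<Rightarrow> bool" where
  "has_indep V E k \<longleftrightarrow> (\<exists>I. I \<subseteq> V \<and> card I = k \<and> (\<forall>x\<in>I. \<forall>y\<in>I. x \<noteq> y \<longrightarrow> \<not> E x y))"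

definition ramsey_good :: "nat \<Rightarrow> nat \<Rightarrow> 'a set \<Rightarrow> ('a \<Rightarrow> 'a \<Rightarrow> bool) \<Rightarrow> bool" where
  "ramsey_good s t V E \<longleftrightarrow> \<not> has_clique V E s \<and> \<not> has_indep V E t"

definition add_edge :: "('a \<Rightarrow> 'a \<Rightarrow> bool) \<Rightarrow> 'a \<Rightarrow> 'a \<Rightarrow> ('a \<Rightarrow> 'a \<Rightarrow> bool)" where
  "add_edge E u v = (\<lambda>x y. E x y \<or> (x = u \<and> y = v) \<or> (x = v \<and> y = u))"

definition remove_edge :: "('a \<Rightarrow> 'a \<Rightarrow> bool) \<Rightarrow> 'a \<Rightarrow> 'a \<Rightarrow> ('a \<Rightarrow> 'a \<Rightarrow> bool)" where
  "remove_edge E u v = (\<lambda>x y. E x y \<and> \<not> ((x = u \<and> y = v) \<or> (x = v \<and> y = u)))"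

definition doubly_saturated_good :: "nat \<Rightarrow> nat \<Rightarrow> 'a set \<Rightarrow> ('a \<Rightarrow> 'a \<Rightarrow> bool) \<Rightarrow> bool" where
  "doubly_saturated_good s t V E \<longleftrightarrow>
     ramsey_good s t V E
     \<and> (\<forall>u\<in>V. \<forall>v\<in>V. u \<noteq> v \<and> \<not> E u v \<longrightarrow> \<not> ramsey_good s t V (add_edge E u v))
     \<and> (\<forall>u\<in>V. \<forall>v\<in>V. u \<noteq> v \<and> E u v \<longrightarrow> \<not> ramsey_good s t V (remove_edge E u v))
     \<and> (\<exists>u\<in>V. \<exists>v\<in>V. u \<noteq> v \<and> \<not> E u v)
     \<and> (\<exists>u\<in>V. \<exists>v\<in>V. u \<noteq> v \<and> E u v)"

definition cnorm :: "nat \<Rightarrow> int \<Rightarrow> int" where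
  "cnorm n x = min (x mod int n) (int n - x mod int n)"

definition circ_vertices :: "nat \<Rightarrow> nat set" where
  "circ_vertices n = {0..<n}"

definition circ_adj :: "nat \<Rightarrow> int set \<Rightarrow> nat \<Rightarrow> nat \<Rightarrow> bool" where
  "circ_adj n S x y \<longleftrightarrow> cnorm n (int x - int y) \<in> S"

end

theory Submission
  imports Defs
begin


definition Qm :: "nat \<Rightarrow> int \<Rightarrow> bool" where
  "Qm m r \<longleftrightarrow> r = int m \<or> r = 5*int m + 1 \<or> (2*int m+1 \<le> r \<and> r \<le> 4*int m)"

definition Pm :: "nat \<Rightarrow> int \<Rightarrow> bool" where
  "Pm m z \<longleftrightarrow> \<bar>z\<bar> = int m \<or> \<bar>z\<bar> = 5*int m + 1 \<or> (2*int m+1 \<le> \<bar>z\<bar> \<and> \<bar>z\<bar> \<le> 4*int m)"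

lemma modr: "(0::int) < n \<Longrightarrow> -n < z \<Longrightarrow> z < n \<Longrightarrow> z mod n = (if 0 \<le> z then z else z + n)"
proof (cases "0 \<le> z")
  case False
  assume a: "0 < n" "-n < z" "z < n"
  have "z mod n = (z + n) mod n" by simp
  also have "\<dots> = z + n" using a False by (intro mod_pos_pos_trivial) auto
  finally show ?thesis using False by simp
qed simp

lemma mod2n: "(0::int) < N \<Longrightarrow> 0 \<le> z \<Longrightarrow> z < 2*N \<Longrightarrow> z mod N = (if z < N then z else z - N)"
proof (cases "z < N")
  case False
  assume a: "0 < N" "0 \<le> z" "z < 2*N"
  have "z mod N = (z - N) mod N" by (simp add: mod_diff_right_eq)
  also have "\<dots> = z - N" using a False by (intro mod_pos_pos_trivial) auto
  finally show ?thesis using False by simp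
qed simp

lemma K0:
  fixes a b c :: int and m :: nat
  assumes "0 < a" "a < b" "b < c" "c < 6*int m+1"
    "Qm m a" "Qm m b" "Qm m c" "Qm m (b-a)" "Qm m (c-a)" "Qm m (c-b)"
  shows False
  using assms unfolding Qm_def
  by (elim disjE conjE; linarith)

lemma K0a:
  fixes a b c :: int and m :: nat
  assumes "0 < a" "a < b" "b < c" "c < 6*int m+1"
    "Qm m a" "Qm m b" "Qm m c" "Qm m \<bar>b-a\<bar>" "Qm m \<bar>c-a\<bar>" "Qm m \<bar>c-b\<bar>"
  shows False
proof -
  have "\<bar>b-a\<bar> = b - a" "\<bar>c-a\<bar> = c - a" "\<bar>c-b\<bar> = c - b" using assms(2,3) by auto
  then show False using K0[OF assms(1-7)] assms(8-10) by simp
qed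

lemma K1:
  fixes a b c :: int and m :: nat
  assumes "0 \<le> a" "a < 6*int m+1" "0 \<le> b" "b < 6*int m+1" "0 \<le> c" "c < 6*int m+1"
    "Qm m a" "Qm m b" "Qm m c" "a \<noteq> b" "a \<noteq> c" "b \<noteq> c"
    "Qm m \<bar>b-a\<bar>" "Qm m \<bar>c-a\<bar>" "Qm m \<bar>c-b\<bar>" "m \<ge> 1"
  shows False
proof -
  have s: "\<bar>x-y\<bar> = \<bar>y-x\<bar>" for x y :: int by (rule abs_minus_commute)
  have q: "Qm m \<bar>a-b\<bar>" "Qm m \<bar>a-c\<bar>" "Qm m \<bar>b-c\<bar>" using assms(13-15) s by metis+
  have a0: "0 < a" "0 < b" "0 < c" using assms(7-9,16) unfolding Qm_def by auto
  have o: "a < b \<or> b < a" "a < c \<or> c < a" "b < c \<or> c < b" using assms(10-12) by auto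
  note k = K0a[of a b c m] K0a[of a c b m] K0a[of b a c m] K0a[of b c a m] K0a[of c a b m] K0a[of c b a m]
  show False using k o q a0 assms(2,4,6-9,13-15) by blast
qed

lemma Qif:
  fixes ra rb :: int and m :: nat
  assumes "0 \<le> ra" "ra < 6*int m+1" "0 \<le> rb" "rb < 6*int m+1" "m \<ge> 1"
    "Qm m (if 0 \<le> ra - rb then ra - rb else ra - rb + (6*int m+1))"
  shows "ra \<noteq> rb \<and> Qm m \<bar>rb - ra\<bar>"
  using assms unfolding Qm_def by (cases "0 \<le> ra - rb") auto

locale G =
  fixes m n :: nat and S :: "int set"
  assumes m2: "m \<ge> 2" and nd: "n = 6*m+1" and Sd: "S = {int m} \<union> {int (2*m+1)..int (3*m)}"
begin

lemma adjQ:
  assumes "x < n" "y < n"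
  shows "circ_adj n S x y \<longleftrightarrow> Qm m ((int x - int y) mod int n)"
proof -
  define r where "r = (int x - int y) mod int n"
  have r: "0 \<le> r" "r < int n" using nd unfolding r_def by auto
  have "circ_adj n S x y \<longleftrightarrow> min r (int n - r) \<in> S"
    unfolding circ_adj_def cnorm_def r_def by simp
  also have "\<dots> \<longleftrightarrow> Qm m r" using r nd unfolding Sd Qm_def by (simp add: min_def) arith
  finally show ?thesis by (simp add: r_def)
qed

definition w :: "nat \<Rightarrow> int \<Rightarrow> nat" where "w u a = nat ((int u + a) mod int n)"

lemma w_lt: "w u a < n" using nd unfolding w_def by (simp add: nat_less_iff)
lemma w_int: "int (w u a) = (int u + a) mod int n" using nd unfolding w_def by simp

lemma w_adj:
  assumes "0 \<le> a" "a < int n" "0 \<le> b" "b < int n"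
  shows "circ_adj n S (w u a) (w u b) \<longleftrightarrow> Pm m (a - b)"
proof -
  have "(int (w u a) - int (w u b)) mod int n = (a - b) mod int n"
    unfolding w_int by (simp add: mod_diff_eq)
  also have "\<dots> = (if 0 \<le> a - b then a - b else a - b + int n)"
    using assms nd by (intro modr) auto
  finally have e: "(int (w u a) - int (w u b)) mod int n = (if 0 \<le> a - b then a - b else a - b + int n)" .
  have "circ_adj n S (w u a) (w u b) \<longleftrightarrow> Qm m (if 0 \<le> a - b then a - b else a - b + int n)"
    using adjQ[OF w_lt w_lt] e by simp
  also have "\<dots> \<longleftrightarrow> Pm m (a - b)"
    using assms nd unfolding Qm_def Pm_def by (cases "0 \<le> a - b") (simp_all, linarith+)
  finally show ?thesis .
qed

lemma w_eq:
  assumes "0 \<le> a" "a < int n" "0 \<le> b" "b < int n"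
  shows "w u a = w u b \<longleftrightarrow> a = b"
proof
  assume "w u a = w u b"
  then have "(int (w u a) - int (w u b)) mod int n = 0" by simp
  moreover have "(int (w u a) - int (w u b)) mod int n = (a - b) mod int n"
    unfolding w_int by (simp add: mod_diff_eq)
  moreover have "(a - b) mod int n = (if 0 \<le> a - b then a - b else a - b + int n)"
    using assms nd by (intro modr) auto
  ultimately show "a = b" using assms by (simp split: if_splits)
qed simp

lemma w_inj: "inj_on (w u) {0..<int n}"
  by (rule inj_onI) (use w_eq in auto)

lemma w0: "u < n \<Longrightarrow> w u 0 = u" unfolding w_def by simp

lemma wk: "u < n \<Longrightarrow> v < n \<Longrightarrow> w u ((int v - int u) mod int n) = v"
  unfolding w_def by (simp add: mod_add_right_eq)


lemma adj_sym: "circ_adj n S x y \<longleftrightarrow> circ_adj n S y x"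
proof -
  have c: "cnorm n (- z) = cnorm n z" for z
    unfolding cnorm_def zmod_zminus1_eq_if using nd by (auto simp: min_def)
  have e: "int y - int x = - (int x - int y)" by simp
  show ?thesis unfolding circ_adj_def e c ..
qed

lemma noK4:
  assumes C: "C \<subseteq> circ_vertices n" "card C = 4" and adj: "\<forall>x\<in>C. \<forall>y\<in>C. x \<noteq> y \<longrightarrow> circ_adj n S x y"
  shows False
proof -
  have "C \<noteq> {}" using C by auto
  then obtain x0 where x0: "x0 \<in> C" by auto
  have "card (C - {x0}) = 3" using C x0 by (simp add: card_Diff_singleton)
  then obtain p q s where pqs: "C - {x0} = {p,q,s}" "p \<noteq> q" "q \<noteq> s" "p \<noteq> s"
    unfolding card_3_iff by auto
  have inC: "p \<in> C" "q \<in> C" "s \<in> C" "p \<noteq> x0" "q \<noteq> x0" "s \<noteq> x0" using pqs by blast+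
  have lt: "x0 < n" "p < n" "q < n" "s < n" using C x0 inC unfolding circ_vertices_def by auto
  have ni: "int n = 6 * int m + 1" using nd by simp
  define rp where "rp = (int p - int x0) mod int n"
  define rq where "rq = (int q - int x0) mod int n"
  define rs where "rs = (int s - int x0) mod int n"
  have r: "0 \<le> rp" "rp < int n" "0 \<le> rq" "rq < int n" "0 \<le> rs" "rs < int n"
    using nd unfolding rp_def rq_def rs_def by auto
  have dm: "(int a - int b) mod int n = (ra - rb) mod int n"
    if "ra = (int a - int x0) mod int n" "rb = (int b - int x0) mod int n" for a b ra rb
    unfolding that by (simp add: mod_diff_eq)
  have md: "(ra - rb) mod int n = (if 0 \<le> ra - rb then ra - rb else ra - rb + int n)"
    if "0 \<le> ra" "ra < int n" "0 \<le> rb" "rb < int n" for ra rb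
    using that nd by (intro modr) auto
  have pair: "Qm m (if 0 \<le> ra - rb then ra - rb else ra - rb + int n)"
    if "circ_adj n S a b" "a < n" "b < n" "ra = (int a - int x0) mod int n" "rb = (int b - int x0) mod int n"
       "0 \<le> ra" "ra < int n" "0 \<le> rb" "rb < int n" for a b ra rb
  proof -
    have "Qm m ((int a - int b) mod int n)" using adjQ[of a b] that by simp
    then show ?thesis using dm[OF that(4,5)] md[OF that(6-9)] by simp
  qed
  have "Qm m rp" "Qm m rq" "Qm m rs"
    using adj inC x0 adjQ lt unfolding rp_def rq_def rs_def by auto
  moreover have "Qm m (if 0 \<le> rp - rq then rp - rq else rp - rq + int n)"
    by (rule pair[OF _ _ _ rp_def rq_def]) (use adj inC lt r pqs in auto)
  moreover have "Qm m (if 0 \<le> rp - rs then rp - rs else rp - rs + int n)"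
    by (rule pair[OF _ _ _ rp_def rs_def]) (use adj inC lt r pqs in auto)
  moreover have "Qm m (if 0 \<le> rq - rs then rq - rs else rq - rs + int n)"
    by (rule pair[OF _ _ _ rq_def rs_def]) (use adj inC lt r pqs in auto)
  ultimately show False using r m2 Qif[where ra=rp and rb=rq and m=m, folded ni] Qif[where ra=rp and rb=rs and m=m, folded ni]
       Qif[where ra=rq and rb=rs and m=m, folded ni] K1[where a=rp and b=rq and c=rs and m=m, folded ni]
    by (simp add: abs_minus_commute)
qed

end

context G begin

lemma ni: "int n = 6 * int m + 1" using nd by simp

lemma noIndep:
  assumes I: "I \<subseteq> circ_vertices n" "card I = m+2" and na: "\<forall>x\<in>I. \<forall>y\<in>I. x \<noteq> y \<longrightarrow> \<not> circ_adj n S x y"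
  shows False
proof -
  have fin: "finite I" using I(1) unfolding circ_vertices_def using finite_subset by blast
  have "I \<noteq> {}" using I by auto
  then obtain x0 where x0: "x0 \<in> I" by auto
  have lt: "y < n" if "y \<in> I" for y using I(1) that unfolding circ_vertices_def by auto
  define t where "t y = (int y - int x0 + 2*int m) mod int n" for y
  have nQ: "\<not> Qm m ((int y - int x0) mod int n)" if "y \<in> I" for y
  proof (cases "y = x0")
    case True then show ?thesis using m2 unfolding Qm_def by simp
  next
    case False then show ?thesis using na that x0 adjQ[of y x0] lt by auto
  qed
  have t04: "0 \<le> t y \<and> t y \<le> 4*int m" if "y \<in> I" for y
  proof -
    define r where "r = (int y - int x0) mod int n"
    have r: "0 \<le> r" "r < int n" using nd unfolding r_def by auto
    have "t y = (r + 2*int m) mod int n" unfolding t_def r_def by (simp add: mod_add_left_eq)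
    also have "\<dots> = (if r + 2*int m < int n then r + 2*int m else r + 2*int m - int n)"
      using r nd by (intro mod2n) auto
    moreover have "\<not> Qm m r" using nQ[OF that] unfolding r_def .
    ultimately show ?thesis using r m2 unfolding Qm_def ni by auto
  qed
  have tdiff: "(t y - t y') mod int n = (int y - int y') mod int n" for y y'
    unfolding t_def by (simp add: mod_diff_eq)
  have tP: "t y \<noteq> t y' \<and> \<not> Pm m (t y - t y')" if "y \<in> I" "y' \<in> I" "y \<noteq> y'" for y y'
  proof -
    have "\<not> Qm m ((int y - int y') mod int n)" using na that adjQ[of y y'] lt by auto
    then have "\<not> Qm m ((t y - t y') mod int n)" using tdiff by simp
    moreover have "(t y - t y') mod int n = (if 0 \<le> t y - t y' then t y - t y' else t y - t y' + int n)"
      using t04[OF that(1)] t04[OF that(2)] ni by (intro modr) auto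
    ultimately have A: "\<not> Pm m (t y - t y')"
      using t04[OF that(1)] t04[OF that(2)] m2 unfolding Qm_def Pm_def ni
      by (cases "0 \<le> t y - t y'") auto
    have "(int y - int y') mod int n = (if 0 \<le> int y - int y' then int y - int y' else int y - int y' + int n)"
      using lt[OF that(1)] lt[OF that(2)] nd by (intro modr) auto
    then have "t y \<noteq> t y'" using tdiff[of y y'] that lt[OF that(1)] lt[OF that(2)]
      by (auto split: if_splits)
    with A show ?thesis by simp
  qed
  define T where "T = t ` I"
  have injt: "inj_on t I" by (rule inj_onI) (use tP in blast)
  have cT: "card T = m + 2" unfolding T_def using card_image[OF injt] I(2) by simp
  have finT: "finite T" unfolding T_def using fin by simp
  have "T \<noteq> {}" using cT by auto
  define a where "a = Min T"
  have aT: "a \<in> T" unfolding a_def using finT \<open>T \<noteq> {}\<close> by simp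
  have amin: "a \<le> s" if "s \<in> T" for s unfolding a_def using finT that by simp
  have TP: "s \<noteq> s' \<Longrightarrow> \<not> Pm m (s - s')" if "s \<in> T" "s' \<in> T" for s s'
    using that tP unfolding T_def by blast
  have T04: "0 \<le> s \<and> s \<le> 4*int m" if "s \<in> T" for s using that t04 unfolding T_def by blast
  have win: "s - a \<le> 2*int m \<and> (s = a \<or> s - a \<noteq> int m)" if "s \<in> T" for s
  proof (cases "s = a")
    case False
    then have "\<not> Pm m (s - a)" using TP that aT by blast
    then show ?thesis using amin[OF that] T04[OF that] T04[OF aT] unfolding Pm_def by auto
  qed simp
  define g where "g s = (if s - a = 2*int m then int m else (s - a) mod int m)" for s
  have mm: "x mod int m = (if x < int m then x else x - int m)" if "0 \<le> x" "x < 2 * int m" for x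
    using that m2 by (intro mod2n) auto
  have gT: "g ` T \<subseteq> {0..int m}"
  proof
    fix z assume "z \<in> g ` T"
    then obtain s where s: "s \<in> T" "z = g s" by auto
    show "z \<in> {0..int m}"
    proof (cases "s - a = 2*int m")
      case False
      then have "s - a < 2 * int m" using win[OF s(1)] by simp
      then show ?thesis using mm[of "s - a"] amin[OF s(1)] s unfolding g_def by auto
    qed (use s g_def in simp)
  qed
  have injg: "inj_on g T"
  proof (rule inj_onI, rule ccontr)
    fix s s' assume s: "s \<in> T" "s' \<in> T" "g s = g s'" "s \<noteq> s'"
    have P: "\<not> Pm m (s - s')" using TP s by blast
    have w1: "s - a \<le> 2*int m" "s' - a \<le> 2*int m" "s - a \<ge> 0" "s' - a \<ge> 0"
      using win s amin by auto
    have w2: "s = a \<or> s - a \<noteq> int m" "s' = a \<or> s' - a \<noteq> int m" using win s by auto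
    show False
    proof (cases "s - a = 2*int m \<or> s' - a = 2*int m")
      case True
      then show False
      proof
        assume e: "s - a = 2*int m"
        then have "s' - a \<noteq> 2*int m" using s by auto
        then show False using s(3) e mm[of "s' - a"] w1 m2 unfolding g_def by (auto split: if_splits)
      next
        assume e: "s' - a = 2*int m"
        then have "s - a \<noteq> 2*int m" using s by auto
        then show False using s(3) e mm[of "s - a"] w1 m2 unfolding g_def by (auto split: if_splits)
      qed
    next
      case False
      then have "(s - a) mod int m = (s' - a) mod int m" using s(3) unfolding g_def by simp
      then show False using mm[of "s - a"] mm[of "s' - a"] w1 False P s(4) unfolding Pm_def
        by (auto split: if_splits)
    qed
  qed
  have "card T = card (g ` T)" using card_image[OF injg] by simp
  also have "\<dots> \<le> card {0..int m}" using gT by (intro card_mono) auto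
  also have "\<dots> = m + 1" by simp
  finally show False using cT by simp
qed

end

context G begin


lemma img_sub: "A \<subseteq> {0..<int n} \<Longrightarrow> w u ` A \<subseteq> circ_vertices n"
  using w_lt unfolding circ_vertices_def by auto

lemma img_card: "A \<subseteq> {0..<int n} \<Longrightarrow> card (w u ` A) = card A"
  by (rule card_image, rule inj_on_subset[OF w_inj])

lemma clique_gen:
  assumes A: "A \<subseteq> {0..<int n}" "card A = 4" "0 \<in> A" "k \<in> A"
   and P: "\<forall>x\<in>A. \<forall>y\<in>A. x \<noteq> y \<longrightarrow> Pm m (x - y) \<or> (x = 0 \<and> y = k) \<or> (x = k \<and> y = 0)"
  shows "has_clique (circ_vertices n) (add_edge (circ_adj n S) (w u 0) (w u k)) 4"
  unfolding has_clique_def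
proof (intro exI conjI)
  show "w u ` A \<subseteq> circ_vertices n" by (rule img_sub[OF A(1)])
  show "card (w u ` A) = 4" using img_card[OF A(1)] A(2) by simp
  show "\<forall>x\<in>w u ` A. \<forall>y\<in>w u ` A. x \<noteq> y \<longrightarrow> add_edge (circ_adj n S) (w u 0) (w u k) x y"
  proof (intro ballI impI)
    fix x y assume "x \<in> w u ` A" "y \<in> w u ` A" "x \<noteq> y"
    then obtain a b where ab: "a \<in> A" "b \<in> A" "x = w u a" "y = w u b" "a \<noteq> b" by blast
    have r: "0 \<le> a" "a < int n" "0 \<le> b" "b < int n" using ab A(1) by auto
    from P ab have "Pm m (a - b) \<or> (a = 0 \<and> b = k) \<or> (a = k \<and> b = 0)" by blast
    then show "add_edge (circ_adj n S) (w u 0) (w u k) x y"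
      unfolding add_edge_def ab using w_adj[OF r] by auto
  qed
qed

lemma indep_gen:
  assumes A: "A \<subseteq> {0..<int n}" "card A = m + 2" "0 \<in> A" "k \<in> A"
   and P: "\<forall>x\<in>A. \<forall>y\<in>A. x \<noteq> y \<longrightarrow> \<not> Pm m (x - y) \<or> (x = 0 \<and> y = k) \<or> (x = k \<and> y = 0)"
  shows "has_indep (circ_vertices n) (remove_edge (circ_adj n S) (w u 0) (w u k)) (m + 2)"
  unfolding has_indep_def
proof (intro exI conjI)
  show "w u ` A \<subseteq> circ_vertices n" by (rule img_sub[OF A(1)])
  show "card (w u ` A) = m + 2" using img_card[OF A(1)] A(2) by simp
  show "\<forall>x\<in>w u ` A. \<forall>y\<in>w u ` A. x \<noteq> y \<longrightarrow> \<not> remove_edge (circ_adj n S) (w u 0) (w u k) x y"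
  proof (intro ballI impI)
    fix x y assume "x \<in> w u ` A" "y \<in> w u ` A" "x \<noteq> y"
    then obtain a b where ab: "a \<in> A" "b \<in> A" "x = w u a" "y = w u b" "a \<noteq> b" by blast
    have r: "0 \<le> a" "a < int n" "0 \<le> b" "b < int n" using ab A(1) by auto
    from P ab have "\<not> Pm m (a - b) \<or> (a = 0 \<and> b = k) \<or> (a = k \<and> b = 0)" by blast
    then show "\<not> remove_edge (circ_adj n S) (w u 0) (w u k) x y"
      unfolding remove_edge_def ab using w_adj[OF r] by auto
  qed
qed

lemma part3:
  assumes k: "0 < k" "k \<le> 3*int m" "\<not> Pm m k"
  shows "has_clique (circ_vertices n) (add_edge (circ_adj n S) (w u 0) (w u k)) 4"
proof (cases "k < int m")
  case True
  show ?thesis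
  proof (rule clique_gen[where A="{0, k, 3*int m, 4*int m}"])
    have d: "0 \<noteq> k" "0 \<noteq> 3*int m" "0 \<noteq> 4*int m" "k \<noteq> 3*int m" "k \<noteq> 4*int m" "3*int m \<noteq> 4*int m"
      using True k m2 by auto
    then show "card {0, k, 3*int m, 4*int m} = 4" by simp
    show "{0, k, 3*int m, 4*int m} \<subseteq> {0..<int n}" using k ni by auto
    show "\<forall>x\<in>{0, k, 3*int m, 4*int m}. \<forall>y\<in>{0, k, 3*int m, 4*int m}. x \<noteq> y \<longrightarrow> Pm m (x - y) \<or> (x = 0 \<and> y = k) \<or> (x = k \<and> y = 0)"
      using True k m2 unfolding Pm_def by auto
  qed auto
next
  case False
  then have kk: "int m < k" "k \<le> 2*int m" using k m2 unfolding Pm_def by auto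
  show ?thesis
  proof (rule clique_gen[where A="{0, k, k + int m, 5*int m + 1}"])
    have d: "0 \<noteq> k" "0 \<noteq> k + int m" "0 \<noteq> 5*int m + 1" "k \<noteq> k + int m" "k \<noteq> 5*int m + 1" "k + int m \<noteq> 5*int m + 1"
      using kk k m2 by auto
    then show "card {0, k, k + int m, 5*int m + 1} = 4" by simp
    show "{0, k, k + int m, 5*int m + 1} \<subseteq> {0..<int n}" using kk ni by auto
    show "\<forall>x\<in>{0, k, k + int m, 5*int m + 1}. \<forall>y\<in>{0, k, k + int m, 5*int m + 1}. x \<noteq> y \<longrightarrow> Pm m (x - y) \<or> (x = 0 \<and> y = k) \<or> (x = k \<and> y = 0)"
      using kk k m2 unfolding Pm_def by auto
  qed auto
qed

lemma part4:
  assumes k: "0 < k" "k \<le> 3*int m" "Pm m k"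
  shows "has_indep (circ_vertices n) (remove_edge (circ_adj n S) (w u 0) (w u k)) (m + 2)"
proof -
  consider "k = int m" | "k = 3 * int m" | "2 * int m < k" "k < 3 * int m"
    using k m2 unfolding Pm_def by linarith
  then show ?thesis
  proof cases
    case 1
    define A where "A = {0, int m, 2*int m - 1, 6*int m} \<union> {1..int m - 2}"
    show ?thesis
    proof (rule indep_gen[where A=A])
      have c1: "card {0, int m, 2*int m - 1, 6*int m} = 4" using m2 by simp
      have "card A = card {0, int m, 2*int m - 1, 6*int m} + card {1..int m - 2}"
        unfolding A_def by (rule card_Un_disjoint) auto
      then show "card A = m + 2" using c1 m2 by simp
      show "A \<subseteq> {0..<int n}" using m2 ni unfolding A_def by auto
      show "\<forall>x\<in>A. \<forall>y\<in>A. x \<noteq> y \<longrightarrow> \<not> Pm m (x - y) \<or> (x = 0 \<and> y = k) \<or> (x = k \<and> y = 0)"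
        using 1 m2 unfolding Pm_def A_def by auto
    qed (use 1 A_def in auto)
  next
    case 2
    define A where "A = {0, 3*int m} \<union> {4*int m + 1..5*int m}"
    show ?thesis
    proof (rule indep_gen[where A=A])
      have c1: "card {0, 3*int m} = 2" using m2 by simp
      have "card A = card {0, 3*int m} + card {4*int m + 1..5*int m}"
        unfolding A_def by (rule card_Un_disjoint) auto
      then show "card A = m + 2" using c1 m2 by simp
      show "A \<subseteq> {0..<int n}" using m2 ni unfolding A_def by auto
      show "\<forall>x\<in>A. \<forall>y\<in>A. x \<noteq> y \<longrightarrow> \<not> Pm m (x - y) \<or> (x = 0 \<and> y = k) \<or> (x = k \<and> y = 0)"
        using 2 m2 unfolding Pm_def A_def by auto
    qed (use 2 A_def in auto)
  next
    case 3
    define A where "A = {0, k, 2*int m} \<union> ({k - 2*int m..k - int m - 1} - {int m})"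
    show ?thesis
    proof (rule indep_gen[where A=A])
      have c1: "card {0, k, 2*int m} = 3" using m2 3 by simp
      have c2: "card ({k - 2*int m..k - int m - 1} - {int m}) = m - 1"
        using 3 by (subst card_Diff_singleton) auto
      have "card A = card {0, k, 2*int m} + card ({k - 2*int m..k - int m - 1} - {int m})"
        unfolding A_def by (rule card_Un_disjoint) (use 3 in auto)
      then show "card A = m + 2" using c1 c2 m2 by simp
      show "A \<subseteq> {0..<int n}" using m2 ni 3 unfolding A_def by auto
      show "\<forall>x\<in>A. \<forall>y\<in>A. x \<noteq> y \<longrightarrow> \<not> Pm m (x - y) \<or> (x = 0 \<and> y = k) \<or> (x = k \<and> y = 0)"
        using 3 m2 unfolding Pm_def A_def by auto
    qed (use 3 A_def in auto)
  qed
qed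

end

context G begin

lemma kprops:
  assumes "u < n" "v < n" "u \<noteq> v"
  shows "0 < (int v - int u) mod int n" "(int v - int u) mod int n < int n"
    "(int u - int v) mod int n = int n - (int v - int u) mod int n"
proof -
  have m: "(int v - int u) mod int n = (if 0 \<le> int v - int u then int v - int u else int v - int u + int n)"
    using assms nd by (intro modr) auto
  have m2': "(int u - int v) mod int n = (if 0 \<le> int u - int v then int u - int v else int u - int v + int n)"
    using assms nd by (intro modr) auto
  show "0 < (int v - int u) mod int n" "(int v - int u) mod int n < int n"
    "(int u - int v) mod int n = int n - (int v - int u) mod int n"
    using assms unfolding m m2' by auto
qed

lemma gen3a:
  assumes "u < n" "v < n" "\<not> circ_adj n S u v" "0 < (int v - int u) mod int n" "(int v - int u) mod int n \<le> 3 * int m"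
  shows "has_clique (circ_vertices n) (add_edge (circ_adj n S) u v) 4"
proof -
  define k where "k = (int v - int u) mod int n"
  have k: "0 \<le> k" "k < int n" using nd unfolding k_def by auto
  have e: "w u 0 = u" "w u k = v" using w0 wk assms unfolding k_def by auto
  have "\<not> Pm m (0 - k)" using assms(3) w_adj[of 0 k u] k e by simp
  then have "\<not> Pm m k" unfolding Pm_def by simp
  then show ?thesis using part3[of k u] assms e unfolding k_def by simp
qed

lemma gen4a:
  assumes "u < n" "v < n" "circ_adj n S u v" "0 < (int v - int u) mod int n" "(int v - int u) mod int n \<le> 3 * int m"
  shows "has_indep (circ_vertices n) (remove_edge (circ_adj n S) u v) (m + 2)"
proof -
  define k where "k = (int v - int u) mod int n"
  have k: "0 \<le> k" "k < int n" using nd unfolding k_def by auto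
  have e: "w u 0 = u" "w u k = v" using w0 wk assms unfolding k_def by auto
  have "Pm m (0 - k)" using assms(3) w_adj[of 0 k u] k e by simp
  then have "Pm m k" unfolding Pm_def by simp
  then show ?thesis using part4[of k u] assms e unfolding k_def by simp
qed

lemma add_sym: "add_edge E u v = add_edge E v u" unfolding add_edge_def by (intro ext) auto
lemma rem_sym: "remove_edge E u v = remove_edge E v u" unfolding remove_edge_def by (intro ext) auto

lemma gen3:
  assumes "u < n" "v < n" "u \<noteq> v" "\<not> circ_adj n S u v"
  shows "has_clique (circ_vertices n) (add_edge (circ_adj n S) u v) 4"
proof (cases "(int v - int u) mod int n \<le> 3 * int m")
  case True then show ?thesis using gen3a kprops assms by blast
next
  case False
  have "has_clique (circ_vertices n) (add_edge (circ_adj n S) v u) 4"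
    using gen3a[of v u] kprops[OF assms(1-3)] kprops[of v u] assms adj_sym False ni by auto
  then show ?thesis using add_sym by metis
qed

lemma gen4:
  assumes "u < n" "v < n" "u \<noteq> v" "circ_adj n S u v"
  shows "has_indep (circ_vertices n) (remove_edge (circ_adj n S) u v) (m + 2)"
proof (cases "(int v - int u) mod int n \<le> 3 * int m")
  case True then show ?thesis using gen4a kprops assms by blast
next
  case False
  have "has_indep (circ_vertices n) (remove_edge (circ_adj n S) v u) (m + 2)"
    using gen4a[of v u] kprops[OF assms(1-3)] kprops[of v u] assms adj_sym False ni by auto
  then show ?thesis using rem_sym by metis
qed

lemma wsmall: "0 \<le> a \<Longrightarrow> a < int n \<Longrightarrow> w 0 a = nat a" unfolding w_def by simp

lemma nonedge: "\<not> circ_adj n S 0 1"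
proof -
  have "\<not> circ_adj n S (w 0 0) (w 0 1)" using w_adj[of 0 1 0] ni m2 unfolding Pm_def by simp
  moreover have "w 0 1 = 1" using wsmall[of 1] ni m2 by simp
  moreover have "w 0 0 = 0" using wsmall[of 0] ni by simp
  ultimately show ?thesis by simp
qed

lemma edge: "circ_adj n S 0 m"
proof -
  have "circ_adj n S (w 0 0) (w 0 (int m))" using w_adj[of 0 "int m" 0] ni m2 unfolding Pm_def by simp
  then show ?thesis using wsmall[of 0] wsmall[of "int m"] ni by simp
qed

end

theorem mainTheorem2:
  fixes m :: nat
  assumes "m \<ge> 2"
  defines "n \<equiv> 6 * m + 1"
      and "S \<equiv> {int m} \<union> {int (2*m+1)..int (3*m)}"
  shows "doubly_saturated_good 4 (m + 2) (circ_vertices n) (circ_adj n S)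
    \<and> \<not> has_clique (circ_vertices n) (circ_adj n S) 4
    \<and> \<not> has_indep (circ_vertices n) (circ_adj n S) (m + 2)
    \<and> (\<forall>u\<in>circ_vertices n. \<forall>v\<in>circ_vertices n. u \<noteq> v \<and> \<not> circ_adj n S u v \<longrightarrow>
          has_clique (circ_vertices n) (add_edge (circ_adj n S) u v) 4)
    \<and> (\<forall>u\<in>circ_vertices n. \<forall>v\<in>circ_vertices n. u \<noteq> v \<and> circ_adj n S u v \<longrightarrow>
          has_indep (circ_vertices n) (remove_edge (circ_adj n S) u v) (m + 2))"
proof -
  interpret G m n S by unfold_locales (simp_all add: assms n_def S_def)
  have c: "\<not> has_clique (circ_vertices n) (circ_adj n S) 4"
    unfolding has_clique_def using noK4 by blast
  have i: "\<not> has_indep (circ_vertices n) (circ_adj n S) (m + 2)"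
    unfolding has_indep_def using noIndep by blast
  have a: "\<forall>u\<in>circ_vertices n. \<forall>v\<in>circ_vertices n. u \<noteq> v \<and> \<not> circ_adj n S u v \<longrightarrow>
          has_clique (circ_vertices n) (add_edge (circ_adj n S) u v) 4"
    using gen3 unfolding circ_vertices_def by auto
  have r: "\<forall>u\<in>circ_vertices n. \<forall>v\<in>circ_vertices n. u \<noteq> v \<and> circ_adj n S u v \<longrightarrow>
          has_indep (circ_vertices n) (remove_edge (circ_adj n S) u v) (m + 2)"
    using gen4 unfolding circ_vertices_def by auto
  have v: "0 \<in> circ_vertices n" "1 \<in> circ_vertices n" "m \<in> circ_vertices n"
    using m2 unfolding circ_vertices_def nd by auto
  have "m \<noteq> 0" using m2 by simp
  have d: "doubly_saturated_good 4 (m + 2) (circ_vertices n) (circ_adj n S)"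
    unfolding doubly_saturated_good_def ramsey_good_def
  proof (intro conjI)
    show "\<not> has_clique (circ_vertices n) (circ_adj n S) 4" by (rule c)
    show "\<not> has_indep (circ_vertices n) (circ_adj n S) (m + 2)" by (rule i)
    show "\<forall>u\<in>circ_vertices n. \<forall>v\<in>circ_vertices n. u \<noteq> v \<and> \<not> circ_adj n S u v \<longrightarrow>
        \<not> (\<not> has_clique (circ_vertices n) (add_edge (circ_adj n S) u v) 4 \<and>
           \<not> has_indep (circ_vertices n) (add_edge (circ_adj n S) u v) (m + 2))"
      using a by simp
    show "\<forall>u\<in>circ_vertices n. \<forall>v\<in>circ_vertices n. u \<noteq> v \<and> circ_adj n S u v \<longrightarrow>
        \<not> (\<not> has_clique (circ_vertices n) (remove_edge (circ_adj n S) u v) 4 \<and>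
           \<not> has_indep (circ_vertices n) (remove_edge (circ_adj n S) u v) (m + 2))"
      using r by simp
    show "\<exists>u\<in>circ_vertices n. \<exists>v\<in>circ_vertices n. u \<noteq> v \<and> \<not> circ_adj n S u v"
    proof (intro bexI conjI)
      show "(0::nat) \<noteq> 1" by simp
      show "\<not> circ_adj n S 0 1" by (rule nonedge)
    qed (use v in auto)
    show "\<exists>u\<in>circ_vertices n. \<exists>v\<in>circ_vertices n. u \<noteq> v \<and> circ_adj n S u v"
    proof (intro bexI conjI)
      show "0 \<noteq> m" using \<open>m \<noteq> 0\<close> by simp
      show "circ_adj n S 0 m" by (rule edge)
    qed (use v in auto)
  qed
  show ?thesis using d c i a r by blast
qed

end
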